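(* Let $R$ be a commutative ring and let $G=\{g_1=e,g_2,\dots,g_n\}$ be a finite group of order $n>1$ with this fixed listing of its elements. Then $\sigma(v)$ is symmetric for every $v\in RG$ if and only if $G$ is an abelian group of exponent $2$.
   Context: For $v=\sum_{g\in G}\alpha_g g\in RG$, $\sigma(v)$ is the $n\times n$ matrix over $R$ whose $(i,j)$ entry is $\alpha_{g_i^{-1}g_j}$. *)

theory Defs
  imports "HOL-Algebra.Algebra"
begin

text \<open>An element v of the group ring RG (G finite) is a coefficient function
  v : G \<rightarrow> R, v = sum of v(g) g.\<close>

definition group_ring_sigma ::
  "('a, 'b) monoid_scheme \<Rightarrow> (nat \<Rightarrow> 'a) \<Rightarrow> ('a \<Rightarrow> 'r) \<Rightarrow> nat \<Rightarrow> nat \<Rightarrow> 'r" where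
  "group_ring_sigma G g v i j = v (inv\<^bsub>G\<^esub> (g i) \<otimes>\<^bsub>G\<^esub> g j)"

definition symmetric_matrix :: "nat \<Rightarrow> (nat \<Rightarrow> nat \<Rightarrow> 'r) \<Rightarrow> bool" where
  "symmetric_matrix n M \<longleftrightarrow> (\<forall>i\<in>{1..n}. \<forall>j\<in>{1..n}. M i j = M j i)"

definition group_exponent :: "('a, 'b) monoid_scheme \<Rightarrow> nat" where
  "group_exponent G = (LEAST m. 0 < m \<and> (\<forall>x\<in>carrier G. x [^]\<^bsub>G\<^esub> m = \<one>\<^bsub>G\<^esub>))"

end

theory Submission
  imports Defs "HOL-Algebra.Multiplicative_Group"
begin

theorem mainTheorem4:
  fixes G :: "('a, 'b) monoid_scheme"
    and g :: "nat \<Rightarrow> 'a"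
    and n :: nat
  assumes "group G"
    and "finite (carrier G)"
    and "order G = n"
    and "n > 1"
    and "bij_betw g {1..n} (carrier G)"
    and "g 1 = \<one>\<^bsub>G\<^esub>"
  shows "(\<forall>v :: 'a \<Rightarrow> 'r :: comm_ring_1. symmetric_matrix n (group_ring_sigma G g v))
         \<longleftrightarrow> (comm_group G \<and> group_exponent G = 2)"
proof -
  interpret group G by fact
  have gin: "\<And>i. i \<in> {1..n} \<Longrightarrow> g i \<in> carrier G"
    using assms(5) bij_betwE by blast
  have gsurj: "\<And>z. z \<in> carrier G \<Longrightarrow> \<exists>j\<in>{1..n}. g j = z"
    using assms(5) by (metis bij_betw_def imageE)
  have one_in: "1 \<in> {1..n}" using assms(4) by simp
  show ?thesis
  proof
    assume H: "\<forall>v :: 'a \<Rightarrow> 'r. symmetric_matrix n (group_ring_sigma G g v)"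
    have sq: "z \<otimes>\<^bsub>G\<^esub> z = \<one>\<^bsub>G\<^esub>" if z: "z \<in> carrier G" for z
    proof -
      obtain j where j: "j \<in> {1..n}" "g j = z" using gsurj[OF z] by blast
      define v :: "'a \<Rightarrow> 'r" where "v = (\<lambda>x. if x = z then 1 else 0)"
      have "group_ring_sigma G g v 1 j = group_ring_sigma G g v j 1"
        using H one_in j unfolding symmetric_matrix_def by blast
      hence "v z = v (inv\<^bsub>G\<^esub> z)"
        unfolding group_ring_sigma_def using assms(6) j z by simp
      hence "inv\<^bsub>G\<^esub> z = z" unfolding v_def by (metis zero_neq_one)
      thus ?thesis using z by (metis r_inv)
    qed
    have inv_self: "inv\<^bsub>G\<^esub> z = z" if "z \<in> carrier G" for z
      using sq that by (metis inv_equality)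
    have comm: "comm_group G"
    proof (rule group_comm_groupI)
      fix x y assume xy: "x \<in> carrier G" "y \<in> carrier G"
      have "x \<otimes>\<^bsub>G\<^esub> y = inv\<^bsub>G\<^esub> (x \<otimes>\<^bsub>G\<^esub> y)" using xy inv_self by simp
      also have "\<dots> = inv\<^bsub>G\<^esub> y \<otimes>\<^bsub>G\<^esub> inv\<^bsub>G\<^esub> x" using xy by (simp add: inv_mult_group)
      also have "\<dots> = y \<otimes>\<^bsub>G\<^esub> x" using xy inv_self by simp
      finally show "x \<otimes>\<^bsub>G\<^esub> y = y \<otimes>\<^bsub>G\<^esub> x" .
    qed
    have "\<exists>z\<in>carrier G. z \<noteq> \<one>\<^bsub>G\<^esub>"
    proof (rule ccontr)
      assume "\<not> ?thesis"
      hence "carrier G \<subseteq> {\<one>\<^bsub>G\<^esub>}" by blast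
      hence "card (carrier G) \<le> 1" by (metis card.empty card.insert card_mono finite.emptyI finite.insertI empty_iff One_nat_def)
      thus False using assms(3,4) unfolding order_def by simp
    qed
    then obtain z where z: "z \<in> carrier G" "z \<noteq> \<one>\<^bsub>G\<^esub>" by blast
    have "group_exponent G = 2"
      unfolding group_exponent_def
    proof (rule Least_equality)
      show "0 < (2::nat) \<and> (\<forall>x\<in>carrier G. x [^]\<^bsub>G\<^esub> (2::nat) = \<one>\<^bsub>G\<^esub>)"
        using sq by (simp add: numeral_2_eq_2)
      fix m :: nat assume m: "0 < m \<and> (\<forall>x\<in>carrier G. x [^]\<^bsub>G\<^esub> m = \<one>\<^bsub>G\<^esub>)"
      show "2 \<le> m"
      proof (rule ccontr)
        assume "\<not> 2 \<le> m" hence "m = 1" using m by simp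
        thus False using m z by simp
      qed
    qed
    thus "comm_group G \<and> group_exponent G = 2" using comm by simp
  next
    assume R: "comm_group G \<and> group_exponent G = 2"
    let ?P = "\<lambda>m. 0 < m \<and> (\<forall>x\<in>carrier G. x [^]\<^bsub>G\<^esub> m = \<one>\<^bsub>G\<^esub>)"
    have ex: "?P (order G)" using assms(3,4) pow_order_eq_1 by auto
    have "?P (group_exponent G)" unfolding group_exponent_def by (rule LeastI, rule ex)
    hence sq: "\<And>z. z \<in> carrier G \<Longrightarrow> z \<otimes>\<^bsub>G\<^esub> z = \<one>\<^bsub>G\<^esub>" using R by (simp add: numeral_2_eq_2)
    have inv_self: "inv\<^bsub>G\<^esub> z = z" if "z \<in> carrier G" for z
      using sq that by (metis inv_equality)
    show "\<forall>v :: 'a \<Rightarrow> 'r. symmetric_matrix n (group_ring_sigma G g v)"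
      unfolding symmetric_matrix_def group_ring_sigma_def
    proof (intro allI ballI)
      fix v :: "'a \<Rightarrow> 'r" and i j assume ij: "i \<in> {1..n}" "j \<in> {1..n}"
      have a: "g i \<in> carrier G" "g j \<in> carrier G" using gin ij by auto
      have "inv\<^bsub>G\<^esub> (g i) \<otimes>\<^bsub>G\<^esub> g j = inv\<^bsub>G\<^esub> (inv\<^bsub>G\<^esub> (g i) \<otimes>\<^bsub>G\<^esub> g j)" using a inv_self by simp
      also have "\<dots> = inv\<^bsub>G\<^esub> (g j) \<otimes>\<^bsub>G\<^esub> g i" using a by (simp add: inv_mult_group)
      finally show "v (inv\<^bsub>G\<^esub> (g i) \<otimes>\<^bsub>G\<^esub> g j) = v (inv\<^bsub>G\<^esub> (g j) \<otimes>\<^bsub>G\<^esub> g i)" by simp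
    qed
  qed
qed

end
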